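(* Let $P\subset\mathbb{R}^2$ be a finite set of $n\ge 1$ points. Then there exists $p\in P$ such that $p\in T$ for every downward facing equilateral triangle $T$ with $|T\cap P|>\frac{2n}{3}$.
   Context: A downward facing equilateral triangle is a closed (filled) equilateral triangle in $\mathbb{R}^2$ having one side parallel to the $x$-axis and the vertex opposite to that side lying strictly below the line containing that side. Equivalently, it is a set of the form $\bigcap_{i=1}^3\{x:\langle u_i,x\rangle\le t_i\}$ with nonempty interior, where $u_1,u_2,u_3$ are the unit vectors making angles $90^\circ,210^\circ,330^\circ$ with the positive $x$-axis and $t_1,t_2,t_3\in\mathbb{R}$. *)

theory Defs
  imports "HOL-Analysis.Analysis"
begin

text \<open>Points of the plane are modelled as pairs of reals. The unit vectors u1, u2, u3
  make angles 90, 210, 330 degrees with the positive x-axis.\<close>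

definition u1 :: "real \<times> real" where "u1 = (0, 1)"
definition u2 :: "real \<times> real" where "u2 = (- sqrt 3 / 2, - 1 / 2)"
definition u3 :: "real \<times> real" where "u3 = (sqrt 3 / 2, - 1 / 2)"

definition down_triangle :: "(real \<times> real) set \<Rightarrow> bool" where
  "down_triangle T \<longleftrightarrow>
     (\<exists>t1 t2 t3 :: real.
        T = {x. u1 \<bullet> x \<le> t1} \<inter> {x. u2 \<bullet> x \<le> t2} \<inter> {x. u3 \<bullet> x \<le> t3}
        \<and> interior T \<noteq> {})"

end

theory Submission
  imports Defs
begin

lemma choose_min:
  fixes P :: "(real \<times> real) set" and H :: "(real \<times> real) set set" and v :: "real \<times> real"
  assumes fin: "finite P" and ne: "H \<noteq> {}" and hP: "\<And>T. T \<in> H \<Longrightarrow> T \<inter> P \<noteq> {}"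
  shows "\<exists>T0\<in>H. \<forall>T\<in>H. \<forall>x\<in>T0 \<inter> P. v \<bullet> x \<le> Max ((\<lambda>y. v \<bullet> y) ` (T \<inter> P))"
proof -
  define S where "S = (\<lambda>T. Max ((\<lambda>y. v \<bullet> y) ` (T \<inter> P))) ` H"
  have Ssub: "S \<subseteq> (\<lambda>y. v \<bullet> y) ` P"
  proof
    fix s assume "s \<in> S"
    then obtain T where T: "T \<in> H" "s = Max ((\<lambda>y. v \<bullet> y) ` (T \<inter> P))" unfolding S_def by auto
    have "s \<in> (\<lambda>y. v \<bullet> y) ` (T \<inter> P)" unfolding T(2)
      using Max_in[of "(\<lambda>y. v \<bullet> y) ` (T \<inter> P)"] fin hP[OF T(1)] by auto
    then show "s \<in> (\<lambda>y. v \<bullet> y) ` P" by auto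
  qed
  have finS: "finite S" using Ssub fin finite_subset by blast
  have neS: "S \<noteq> {}" using ne unfolding S_def by auto
  have "Min S \<in> S" using Min_in[OF finS neS] .
  then obtain T0 where T0: "T0 \<in> H" "Min S = Max ((\<lambda>y. v \<bullet> y) ` (T0 \<inter> P))" unfolding S_def by auto
  show ?thesis
  proof (intro bexI[OF _ T0(1)] ballI)
    fix T x assume T: "T \<in> H" and x: "x \<in> T0 \<inter> P"
    have "v \<bullet> x \<le> Max ((\<lambda>y. v \<bullet> y) ` (T0 \<inter> P))"
      using x fin by (intro Max_ge) auto
    also have "\<dots> = Min S" using T0(2) by simp
    also have "\<dots> \<le> Max ((\<lambda>y. v \<bullet> y) ` (T \<inter> P))"
      using T finS unfolding S_def by (intro Min_le) auto
    finally show "v \<bullet> x \<le> Max ((\<lambda>y. v \<bullet> y) ` (T \<inter> P))" .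
  qed
qed

lemma three_heavy:
  fixes P A B C :: "'a set"
  assumes fin: "finite P" and n: "card P = n" and n1: "n \<ge> 1"
    and hA: "real (card (A \<inter> P)) > 2 * real n / 3"
    and hB: "real (card (B \<inter> P)) > 2 * real n / 3"
    and hC: "real (card (C \<inter> P)) > 2 * real n / 3"
  shows "\<exists>p\<in>P. p \<in> A \<and> p \<in> B \<and> p \<in> C"
proof (rule ccontr)
  assume "\<not> ?thesis"
  then have "P \<subseteq> (P - A) \<union> (P - B) \<union> (P - C)" by auto
  then have "card P \<le> card ((P - A) \<union> (P - B) \<union> (P - C))"
    using fin by (intro card_mono) auto
  also have "\<dots> \<le> card (P - A) + card (P - B) + card (P - C)"
  proof -
    have "card ((P - A) \<union> (P - B) \<union> (P - C)) \<le> card ((P - A) \<union> (P - B)) + card (P - C)"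
      by (rule card_Un_le)
    moreover have "card ((P - A) \<union> (P - B)) \<le> card (P - A) + card (P - B)"
      by (rule card_Un_le)
    ultimately show ?thesis by linarith
  qed
  finally have le: "card P \<le> card (P - A) + card (P - B) + card (P - C)" .
  have cA: "card (P - A) + card (A \<inter> P) = n"
    using card_Int_Diff[OF fin, of A] n by (simp add: Int_commute)
  have cB: "card (P - B) + card (B \<inter> P) = n"
    using card_Int_Diff[OF fin, of B] n by (simp add: Int_commute)
  have cC: "card (P - C) + card (C \<inter> P) = n"
    using card_Int_Diff[OF fin, of C] n by (simp add: Int_commute)
  have "real n \<le> real (card (P - A)) + real (card (P - B)) + real (card (P - C))"
    using le n by linarith
  moreover have "real (card (P - A)) + real (card (A \<inter> P)) = real n"
    using cA by (metis of_nat_add)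
  moreover have "real (card (P - B)) + real (card (B \<inter> P)) = real n"
    using cB by (metis of_nat_add)
  moreover have "real (card (P - C)) + real (card (C \<inter> P)) = real n"
    using cC by (metis of_nat_add)
  ultimately show False using hA hB hC n1 by linarith
qed

theorem corollary1:
  fixes P :: "(real \<times> real) set" and n :: nat
  assumes "finite P" and "card P = n" and "n \<ge> 1"
  shows "\<exists>p\<in>P. \<forall>T. down_triangle T \<and> real (card (T \<inter> P)) > 2 * real n / 3 \<longrightarrow> p \<in> T"
proof -
  define H where "H = {T. down_triangle T \<and> real (card (T \<inter> P)) > 2 * real n / 3}"
  show ?thesis
  proof (cases "H = {}")
    case True
    have "P \<noteq> {}" using assms by auto
    then obtain p where "p \<in> P" by auto
    then show ?thesis using True unfolding H_def by auto
  next
    case False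
    have hP: "T \<inter> P \<noteq> {}" if "T \<in> H" for T
    proof
      assume "T \<inter> P = {}"
      then show False using that assms(3) unfolding H_def by auto
    qed
    obtain T1 where T1: "T1 \<in> H" "\<forall>T\<in>H. \<forall>x\<in>T1 \<inter> P. u1 \<bullet> x \<le> Max ((\<lambda>y. u1 \<bullet> y) ` (T \<inter> P))"
      using choose_min[OF assms(1) False hP] by blast
    obtain T2 where T2: "T2 \<in> H" "\<forall>T\<in>H. \<forall>x\<in>T2 \<inter> P. u2 \<bullet> x \<le> Max ((\<lambda>y. u2 \<bullet> y) ` (T \<inter> P))"
      using choose_min[OF assms(1) False hP] by blast
    obtain T3 where T3: "T3 \<in> H" "\<forall>T\<in>H. \<forall>x\<in>T3 \<inter> P. u3 \<bullet> x \<le> Max ((\<lambda>y. u3 \<bullet> y) ` (T \<inter> P))"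
      using choose_min[OF assms(1) False hP] by blast
    obtain p where p: "p \<in> P" "p \<in> T1" "p \<in> T2" "p \<in> T3"
      using three_heavy[OF assms, of T1 T2 T3] T1(1) T2(1) T3(1) unfolding H_def by blast
    show ?thesis
    proof (intro bexI[OF _ p(1)] allI impI)
      fix T assume hT: "down_triangle T \<and> real (card (T \<inter> P)) > 2 * real n / 3"
      then have TH: "T \<in> H" unfolding H_def by auto
      from hT obtain t1 t2 t3 where Teq:
        "T = {x. u1 \<bullet> x \<le> t1} \<inter> {x. u2 \<bullet> x \<le> t2} \<inter> {x. u3 \<bullet> x \<le> t3}"
        unfolding down_triangle_def by blast
      have fin: "finite (T \<inter> P)" using assms(1) by auto
      have ne: "T \<inter> P \<noteq> {}" using hP[OF TH] .
      have m1: "Max ((\<lambda>y. u1 \<bullet> y) ` (T \<inter> P)) \<le> t1"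
        using fin ne by (subst Max_le_iff) (auto simp: Teq)
      have m2: "Max ((\<lambda>y. u2 \<bullet> y) ` (T \<inter> P)) \<le> t2"
        using fin ne by (subst Max_le_iff) (auto simp: Teq)
      have m3: "Max ((\<lambda>y. u3 \<bullet> y) ` (T \<inter> P)) \<le> t3"
        using fin ne by (subst Max_le_iff) (auto simp: Teq)
      have "u1 \<bullet> p \<le> Max ((\<lambda>y. u1 \<bullet> y) ` (T \<inter> P))" using T1(2) TH p by blast
      with m1 have "u1 \<bullet> p \<le> t1" by linarith
      moreover have "u2 \<bullet> p \<le> Max ((\<lambda>y. u2 \<bullet> y) ` (T \<inter> P))" using T2(2) TH p by blast
      with m2 have "u2 \<bullet> p \<le> t2" by linarith
      moreover have "u3 \<bullet> p \<le> Max ((\<lambda>y. u3 \<bullet> y) ` (T \<inter> P))" using T3(2) TH p by blast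
      with m3 have "u3 \<bullet> p \<le> t3" by linarith
      ultimately show "p \<in> T" unfolding Teq by auto
    qed
  qed
qed

end
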